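(* Let $n \geq 2$ and let $P_n=u_0u_1\dots u_n$ be the path with $n$ edges. For every walk $W$ of $P_n$, there exists a walk of $P_n$ equivalent to $W$ which follows a walk $S$ of the form $S=u_iu_{i-1}\dots u_mu_{m+1}\dots u_Mu_{M-1}\dots u_{j}$ for some indices $m \leq i\le j \leq M$.
   Context: A walk of a graph $G$ is a sequence of vertices $v_0\dots v_l$ with $v_tv_{t+1}\in E(G)$ for all $t$ (vertices and edges may repeat). A walk $W'$ follows the walk $W=v_0\dots v_l$ if there are non-negative integers $i_0,\dots,i_{l-1}$ such that $W'=v_0(v_1v_0)^{i_0}v_1\dots v_{l-1}(v_lv_{l-1})^{i_{l-1}}v_l$, i.e. $W'$ is obtained by traversing $W$ from start to end and inserting, along each edge $v_tv_{t+1}$, some number $i_t$ of half-turns $v_{t+1}v_tv_{t+1}$. Two walks are equivalent if their multisets of traversed edges are equal. *)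

theory Defs
  imports Main "HOL-Library.Multiset"
begin

text \<open>The path P_n = u_0 u_1 ... u_n: vertex u_k is represented by the natural number k,
  vertex set {0..n}, and u_a u_b is an edge iff the indices differ by one.\<close>

definition path_adj :: "nat \<Rightarrow> nat \<Rightarrow> bool" where
  "path_adj a b \<longleftrightarrow> Suc a = b \<or> Suc b = a"

definition is_walk_path :: "nat \<Rightarrow> nat list \<Rightarrow> bool" where
  "is_walk_path n W \<longleftrightarrow> W \<noteq> [] \<and> set W \<subseteq> {0..n} \<and>
     (\<forall>t. Suc t < length W \<longrightarrow> path_adj (W ! t) (W ! Suc t))"

definition walk_edges :: "'a list \<Rightarrow> 'a set multiset" where
  "walk_edges W = mset (map (\<lambda>(a, b). {a, b}) (zip W (tl W)))"

definition equivalent_walks :: "'a list \<Rightarrow> 'a list \<Rightarrow> bool" where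
  "equivalent_walks W1 W2 \<longleftrightarrow> walk_edges W1 = walk_edges W2"

text \<open>expand W cs = v_0 (v_1 v_0)^{i_0} v_1 ... v_{l-1} (v_l v_{l-1})^{i_{l-1}} v_l
  for W = v_0 ... v_l and cs = [i_0, ..., i_{l-1}].\<close>

fun expand :: "'a list \<Rightarrow> nat list \<Rightarrow> 'a list" where
  "expand (v # w # rest) (c # cs) = v # concat (replicate c [w, v]) @ expand (w # rest) cs"
| "expand W cs = W"

definition follows :: "'a list \<Rightarrow> 'a list \<Rightarrow> bool" where
  "follows W' W \<longleftrightarrow> (\<exists>cs. length cs = length W - 1 \<and> W' = expand W cs)"

definition zigzag :: "nat \<Rightarrow> nat \<Rightarrow> nat \<Rightarrow> nat \<Rightarrow> nat list" where
  "zigzag i m M j = rev [m..<Suc i] @ [Suc m..<Suc M] @ rev [j..<M]"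

end

theory Submission
  imports Defs
begin

definition edg :: "nat \<Rightarrow> nat set" where "edg k = {k, Suc k}"

lemma edg_inj[simp]: "edg k = edg k' \<longleftrightarrow> k = k'"
  unfolding edg_def by (auto simp: doubleton_eq_iff)

lemma we_Nil[simp]: "walk_edges [] = {#}"
  by (simp add: walk_edges_def)
lemma we_single[simp]: "walk_edges [x] = {#}"
  by (simp add: walk_edges_def)
lemma we_Cons2[simp]: "walk_edges (x # y # r) = add_mset {x, y} (walk_edges (y # r))"
  by (simp add: walk_edges_def)

lemma we_append:
  "walk_edges (xs @ ys) = walk_edges xs + walk_edges ys +
     (if xs \<noteq> [] \<and> ys \<noteq> [] then {#{last xs, hd ys}#} else {#})"
proof (induction xs)
  case Nil then show ?case by simp
next
  case (Cons x xs)
  then show ?case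
    by (cases xs; cases ys) auto
qed

lemma we_rev[simp]: "walk_edges (rev xs) = walk_edges xs"
proof (induction xs)
  case Nil then show ?case by simp
next
  case (Cons x xs)
  then show ?case
    by (cases xs) (auto simp: we_append last_rev hd_rev insert_commute)
qed

lemma we_upt: "a \<le> b \<Longrightarrow> walk_edges [a..<Suc b] = image_mset edg (mset [a..<b])"
proof (induction b)
  case 0 then show ?case by simp
next
  case (Suc b)
  show ?case
  proof (cases "a = Suc b")
    case True then show ?thesis by simp
  next
    case False
    then have "a \<le> b" using Suc by simp
    then have "[a..<Suc (Suc b)] = [a..<Suc b] @ [Suc b]" by simp
    have "walk_edges [a..<Suc (Suc b)] = walk_edges [a..<Suc b] + {#{b, Suc b}#}"
      unfolding \<open>[a..<Suc (Suc b)] = [a..<Suc b] @ [Suc b]\<close> we_append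
      using \<open>a \<le> b\<close> by (simp del: upt_Suc)
    moreover have "[a..<Suc b] = [a..<b] @ [b]" using \<open>a \<le> b\<close> by simp
    ultimately show ?thesis using Suc.IH[OF \<open>a \<le> b\<close>]
      by (simp del: upt_Suc add: edg_def)
  qed
qed

lemma walk_succ: "is_walk_path n W \<longleftrightarrow> W \<noteq> [] \<and> set W \<subseteq> {0..n} \<and> successively path_adj W"
  unfolding is_walk_path_def successively_conv_nth by simp

lemma adj_edg: "path_adj v w \<Longrightarrow> {v, w} = edg (min v w)"
  unfolding path_adj_def edg_def by auto

lemma walk_inv:
  "successively path_adj W \<Longrightarrow> W \<noteq> [] \<Longrightarrow> \<exists>a b. set W = {a..b} \<and>
     (\<forall>x\<in>#walk_edges W. \<exists>k. x = edg k \<and> a \<le> k \<and> k < b) \<and>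
     (\<forall>k. a \<le> k \<and> k < b \<longrightarrow> edg k \<in># walk_edges W) \<and>
     (\<forall>k. odd (count (walk_edges W) (edg k)) \<longleftrightarrow> ((hd W \<le> k) \<noteq> (last W \<le> k)))"
proof (induction W)
  case Nil then show ?case by simp
next
  case (Cons v W)
  show ?case
  proof (cases W)
    case Nil then show ?thesis by (intro exI[of _ v] exI[of _ v]) auto
  next
    case (Cons w r)
    with Cons.prems have adj: "path_adj v w" and sw: "successively path_adj (w # r)" by auto
    from Cons.IH[OF sw[folded Cons]] Cons obtain a b where
      ab: "set (w # r) = {a..b}"
      and A2: "\<forall>x\<in>#walk_edges (w # r). \<exists>k. x = edg k \<and> a \<le> k \<and> k < b"
      and A3: "\<forall>k. a \<le> k \<and> k < b \<longrightarrow> edg k \<in># walk_edges (w # r)"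
      and A4: "\<forall>k. odd (count (walk_edges (w # r)) (edg k)) \<longleftrightarrow> ((w \<le> k) \<noteq> (last (w # r) \<le> k))"
      by auto
    have we: "walk_edges (v # W) = add_mset (edg (min v w)) (walk_edges (w # r))"
      using Cons adj_edg[OF adj] by simp
    have w_in: "w \<in> {a..b}" using ab by auto
    have par: "\<forall>k. odd (count (walk_edges (v # W)) (edg k)) \<longleftrightarrow> ((hd (v # W) \<le> k) \<noteq> (last (v # W) \<le> k))"
    proof
      fix k
      have "count (walk_edges (v # W)) (edg k) = count (walk_edges (w # r)) (edg k) + (if k = min v w then 1 else 0)"
        unfolding we by auto
      moreover have "((v \<le> k) \<noteq> (w \<le> k)) \<longleftrightarrow> k = min v w"
        using adj unfolding path_adj_def by auto
      ultimately show "odd (count (walk_edges (v # W)) (edg k)) \<longleftrightarrow> ((hd (v # W) \<le> k) \<noteq> (last (v # W) \<le> k))"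
        using A4[rule_format, of k] Cons by auto
    qed
    consider "v \<in> {a..b}" | "v = a - 1 \<and> w = a \<and> a > 0" | "v = Suc b \<and> w = b"
      using adj w_in unfolding path_adj_def by fastforce
    then show ?thesis
    proof cases
      case 1
      have "min v w \<ge> a \<and> min v w < b" using 1 w_in adj unfolding path_adj_def by auto
      have s: "set (v # W) = {a..b}" using 1 ab Cons by (simp add: insert_absorb)
      have e2: "\<forall>x\<in>#walk_edges (v # W). \<exists>k. x = edg k \<and> a \<le> k \<and> k < b"
        unfolding we using A2 \<open>min v w \<ge> a \<and> min v w < b\<close> by (simp only: set_mset_add_mset_insert ball_simps) blast
      have e3: "\<forall>k. a \<le> k \<and> k < b \<longrightarrow> edg k \<in># walk_edges (v # W)"
        unfolding we using A3 by simp
      show ?thesis by (rule exI[of _ a], rule exI[of _ b]) (intro conjI s e2 e3 par)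
    next
      case 2
      have ab': "a \<le> b" using w_in by simp
      have "insert (a-1) {a..b} = {a-1..b}" using 2 ab' by (auto simp: le_diff_conv)
      then have s: "set (v # W) = {a-1..b}" using 2 ab Cons by simp
      have mvw: "min v w = a - 1" "a - 1 < b" using 2 ab' by auto
      have e2: "\<forall>x\<in>#walk_edges (v # W). \<exists>k. x = edg k \<and> a - 1 \<le> k \<and> k < b"
        unfolding we mvw(1) set_mset_add_mset_insert ball_simps
      proof (intro conjI)
        show "\<exists>k. edg (a - 1) = edg k \<and> a - 1 \<le> k \<and> k < b" using mvw(2) by (intro exI[of _ "a - 1"]) simp
        show "\<forall>x\<in>#walk_edges (w # r). \<exists>k. x = edg k \<and> a - 1 \<le> k \<and> k < b"
        proof
          fix x assume "x \<in># walk_edges (w # r)"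
          then obtain k where "x = edg k" "a \<le> k" "k < b" using A2 by blast
          then show "\<exists>k. x = edg k \<and> a - 1 \<le> k \<and> k < b" by (intro exI[of _ k]) simp
        qed
      qed
      have e3: "\<forall>k. a - 1 \<le> k \<and> k < b \<longrightarrow> edg k \<in># walk_edges (v # W)"
      proof (intro allI impI)
        fix k assume "a - 1 \<le> k \<and> k < b"
        then consider "k = a - 1" | "a \<le> k \<and> k < b" by linarith
        then show "edg k \<in># walk_edges (v # W)" unfolding we using A3 mvw by cases simp_all
      qed
      show ?thesis by (rule exI[of _ "a-1"], rule exI[of _ b]) (intro conjI s e2 e3 par)
    next
      case 3
      have ab': "a \<le> b" using w_in by simp
      have "insert (Suc b) {a..b} = {a..Suc b}" using ab' by auto
      then have s: "set (v # W) = {a..Suc b}" using 3 ab Cons by simp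
      have mvw: "min v w = b" using 3 by auto
      have e2: "\<forall>x\<in>#walk_edges (v # W). \<exists>k. x = edg k \<and> a \<le> k \<and> k < Suc b"
        unfolding we mvw set_mset_add_mset_insert ball_simps
      proof (intro conjI)
        show "\<exists>k. edg b = edg k \<and> a \<le> k \<and> k < Suc b" using ab' by (intro exI[of _ b]) simp
        show "\<forall>x\<in>#walk_edges (w # r). \<exists>k. x = edg k \<and> a \<le> k \<and> k < Suc b"
        proof
          fix x assume "x \<in># walk_edges (w # r)"
          then obtain k where "x = edg k" "a \<le> k" "k < b" using A2 by blast
          then show "\<exists>k. x = edg k \<and> a \<le> k \<and> k < Suc b" by (intro exI[of _ k]) simp
        qed
      qed
      have e3: "\<forall>k. a \<le> k \<and> k < Suc b \<longrightarrow> edg k \<in># walk_edges (v # W)"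
      proof (intro allI impI)
        fix k assume "a \<le> k \<and> k < Suc b"
        then consider "k = b" | "a \<le> k \<and> k < b" by linarith
        then show "edg k \<in># walk_edges (v # W)" unfolding we using A3 mvw by cases simp_all
      qed
      show ?thesis by (rule exI[of _ a], rule exI[of _ "Suc b"]) (intro conjI s e2 e3 par)
    qed
  qed
qed


lemma adj_sym: "path_adj v w \<Longrightarrow> path_adj w v"
  unfolding path_adj_def by auto

lemma rep_succ: "path_adj v w \<Longrightarrow>
  successively path_adj (v # concat (replicate c [w, v]) @ R) \<longleftrightarrow> successively path_adj (v # R)"
  by (induction c) (auto simp: adj_sym)

lemma rep_set: "set (v # concat (replicate c [w, v]) @ R) \<subseteq> {v, w} \<union> set R"
  by (induction c) auto

lemma rep_we: "walk_edges (v # concat (replicate c [w, v]) @ R) =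
   replicate_mset (2 * c) {v, w} + walk_edges (v # R)"
  by (induction c) (auto simp: insert_commute)

lemma expand_props:
  "successively path_adj S \<Longrightarrow> successively path_adj (expand S cs) \<and> set (expand S cs) \<subseteq> set S \<and>
    (S \<noteq> [] \<longrightarrow> expand S cs \<noteq> [] \<and> hd (expand S cs) = hd S)"
proof (induction S cs rule: expand.induct)
  case (1 v w rest c cs)
  then have adj: "path_adj v w" and IH: "successively path_adj (expand (w # rest) cs)"
    "set (expand (w # rest) cs) \<subseteq> set (w # rest)" "expand (w # rest) cs \<noteq> []"
    "hd (expand (w # rest) cs) = w" by auto
  obtain R where R: "expand (w # rest) cs = w # R" using IH(3,4) by (cases "expand (w # rest) cs") auto
  have "successively path_adj (expand (v # w # rest) (c # cs))"
    using rep_succ[OF adj, of c "expand (w # rest) cs"] IH(1) R adj by simp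
  moreover have "set (expand (v # w # rest) (c # cs)) \<subseteq> set (v # w # rest)"
    using rep_set[of v c w "expand (w # rest) cs"] IH(2) by auto
  ultimately show ?case by simp
qed auto

lemma expand_len_hd: "S \<noteq> [] \<Longrightarrow> \<exists>R. expand S cs = hd S # R"
  by (induction S cs rule: expand.induct) (auto simp: neq_Nil_conv)

lemma rep_plus: "replicate_mset (a + b) x = replicate_mset a x + replicate_mset b x"
  by (rule multiset_eqI) simp

lemma expand_we:
  "set_mset X \<subseteq> set_mset (walk_edges S) \<Longrightarrow>
    \<exists>cs. length cs = length S - 1 \<and> walk_edges (expand S cs) = walk_edges S + X + X"
proof (induction S arbitrary: X rule: induct_list012)
  case 1 then show ?case by (intro exI[of _ "[]"]) auto
next
  case (2 x) then show ?case by (intro exI[of _ "[]"]) auto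
next
  case (3 v w r)
  define X' where "X' = filter_mset (\<lambda>x. x \<noteq> {v, w}) X"
  define c where "c = count X {v, w}"
  have Xs: "X = replicate_mset c {v, w} + X'"
    unfolding X'_def c_def by (rule multiset_eqI) auto
  have "set_mset X' \<subseteq> set_mset (walk_edges (w # r))"
    using "3.prems" unfolding X'_def by auto
  from "3.IH"(2)[OF this] obtain cs where cs: "length cs = length (w # r) - 1"
    "walk_edges (expand (w # r) cs) = walk_edges (w # r) + X' + X'" by blast
  obtain R where R: "expand (w # r) cs = w # R" using expand_len_hd[of "w # r" cs] by auto
  have "walk_edges (expand (v # w # r) (c # cs)) = replicate_mset (2 * c) {v, w} + walk_edges (v # w # R)"
    using rep_we[of v c w "w # R"] R by simp
  also have "\<dots> = walk_edges (v # w # r) + X + X"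
    using cs(2) R unfolding Xs by (simp add: mult_2 rep_plus)
  finally show ?case using cs(1) by (intro exI[of _ "c # cs"]) simp
qed


lemma succ_upt: "successively path_adj [a..<b]"
  by (auto simp: successively_conv_nth path_adj_def)

lemma succ_rev_upt: "successively path_adj (rev [a..<b])"
  using succ_upt[of a b] unfolding successively_rev path_adj_def by (simp add: disj_commute)

lemma zz_MM: "m \<le> i \<Longrightarrow> i \<le> j \<Longrightarrow> j \<le> M \<Longrightarrow> m = M \<Longrightarrow> zigzag i m M j = [M]"
  by (simp add: zigzag_def)

lemma zz_succ:
  assumes "m \<le> i" "i \<le> j" "j \<le> M"
  shows "successively path_adj (zigzag i m M j) \<and> zigzag i m M j \<noteq> [] \<and> set (zigzag i m M j) \<subseteq> {m..M}"
proof (cases "m = M")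
  case True then show ?thesis using zz_MM assms by simp
next
  case False
  then have mM: "m < M" using assms by simp
  define A where "A = rev [m..<Suc i]"
  define B where "B = [Suc m..<Suc M]"
  define C where "C = rev [j..<M]"
  have z: "zigzag i m M j = A @ B @ C" unfolding A_def B_def C_def zigzag_def by simp
  have A: "A \<noteq> []" "last A = m" unfolding A_def using assms by (auto simp: last_rev)
  have B: "B \<noteq> []" "hd B = Suc m" "last B = M" unfolding B_def using mM
    by (simp, simp del: upt_Suc add: upt_conv_Cons, simp)
  have C: "C \<noteq> [] \<Longrightarrow> hd C = M - 1" unfolding C_def by (auto simp: hd_rev)
  have sA: "successively path_adj A" unfolding A_def by (rule succ_rev_upt)
  have sB: "successively path_adj B" unfolding B_def by (rule succ_upt)
  have sC: "successively path_adj C" unfolding C_def by (rule succ_rev_upt)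
  have "successively path_adj (B @ C)"
    using sB sC B C mM by (auto simp: successively_append_iff path_adj_def)
  then have "successively path_adj (A @ B @ C)"
    using sA A B by (auto simp: successively_append_iff path_adj_def)
  moreover have "set (A @ B @ C) \<subseteq> {m..M}" unfolding A_def B_def C_def using assms by auto
  ultimately show ?thesis unfolding z using A by simp
qed

lemma zz_we:
  assumes "m \<le> i" "i \<le> j" "j \<le> M"
  shows "walk_edges (zigzag i m M j) = image_mset edg (mset [m..<i] + mset [m..<M] + mset [j..<M])"
proof (cases "m = M")
  case True then show ?thesis using zz_MM assms by simp
next
  case False
  then have mM: "m < M" using assms by simp
  then obtain M' where M': "M = Suc M'" by (cases M) auto
  define A where "A = rev [m..<Suc i]"
  define B where "B = [Suc m..<Suc M]"
  define C where "C = rev [j..<M]"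
  have z: "zigzag i m M j = A @ B @ C" unfolding A_def B_def C_def zigzag_def by simp
  have A: "A \<noteq> []" "last A = m" unfolding A_def using assms by (auto simp: last_rev)
  have B: "B \<noteq> []" "hd B = Suc m" "last B = M" unfolding B_def using mM
    by (simp, simp del: upt_Suc add: upt_conv_Cons, simp)
  have wA: "walk_edges A = image_mset edg (mset [m..<i])" unfolding A_def we_rev using assms by (intro we_upt) simp
  have wB: "walk_edges B = image_mset edg (mset [Suc m..<M])" unfolding B_def using mM by (intro we_upt) simp
  have mMs: "mset [m..<M] = add_mset m (mset [Suc m..<M])" using mM upt_conv_Cons by simp
  have wBC: "walk_edges (B @ C) = image_mset edg (mset [Suc m..<M] + mset [j..<M])"
  proof (cases "j = M")
    case True then show ?thesis using wB unfolding C_def by simp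
  next
    case False
    then have jM: "j \<le> M'" using assms M' by simp
    have "walk_edges C = image_mset edg (mset [j..<M'])" unfolding C_def M' we_rev by (intro we_upt jM)
    moreover have "C \<noteq> []" "hd C = M'" unfolding C_def M' using jM by (auto simp: hd_rev)
    moreover have "mset [j..<M] = add_mset M' (mset [j..<M'])" unfolding M' using jM by simp
    ultimately show ?thesis using B wB M' by (simp add: we_append edg_def insert_commute)
  qed
  have "walk_edges (A @ B @ C) = walk_edges A + walk_edges (B @ C) + {#{m, Suc m}#}"
    using A B by (simp add: we_append)
  also have "\<dots> = image_mset edg (mset [m..<i] + mset [m..<M] + mset [j..<M])"
    unfolding wA wBC mMs by (simp add: edg_def)
  finally show ?thesis unfolding z .
qed


lemma count_img_edg: "count (image_mset edg N) (edg k) = count N k"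
  by (induction N) auto

theorem lemma5p3:
  fixes n :: nat and W :: "nat list"
  assumes "n \<ge> 2"
    and "is_walk_path n W"
  shows "\<exists>W' S i j m M. is_walk_path n W' \<and> equivalent_walks W' W \<and>
           is_walk_path n S \<and> follows W' S \<and>
           m \<le> i \<and> i \<le> j \<and> j \<le> M \<and> S = zigzag i m M j"
proof -
  have Wne: "W \<noteq> []" and Wset: "set W \<subseteq> {0..n}" and Wsucc: "successively path_adj W"
    using assms(2) unfolding walk_succ by auto
  obtain a b where ab: "set W = {a..b}"
    and A2: "\<forall>x\<in>#walk_edges W. \<exists>k. x = edg k \<and> a \<le> k \<and> k < b"
    and A3: "\<forall>k. a \<le> k \<and> k < b \<longrightarrow> edg k \<in># walk_edges W"
    and A4: "\<forall>k. odd (count (walk_edges W) (edg k)) \<longleftrightarrow> ((hd W \<le> k) \<noteq> (last W \<le> k))"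
    using walk_inv[OF Wsucc Wne] by blast
  define s where "s = hd W"
  define t where "t = last W"
  have st: "s \<in> {a..b}" "t \<in> {a..b}" unfolding s_def t_def using Wne ab[symmetric] by auto
  define i where "i = min s t"
  define j where "j = max s t"
  have ij: "a \<le> i" "i \<le> j" "j \<le> b" unfolding i_def j_def using st by auto
  have bn: "b \<le> n" using ab Wset st by auto
  define S where "S = zigzag i a b j"
  have Sp: "successively path_adj S" "S \<noteq> []" "set S \<subseteq> {a..b}"
    using zz_succ[OF ij] unfolding S_def by auto
  have Swe: "walk_edges S = image_mset edg (mset [a..<i] + mset [a..<b] + mset [j..<b])"
    unfolding S_def by (rule zz_we[OF ij])
  define c where "c k = count (walk_edges W) (edg k)" for k
  define d where "d k = count (walk_edges S) (edg k)" for k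
  have dk: "d k = (if a \<le> k \<and> k < i then 1 else 0) + (if a \<le> k \<and> k < b then 1 else 0)
      + (if j \<le> k \<and> k < b then 1 else 0)" for k
    unfolding d_def Swe count_img_edg by simp
  have cd: "d k \<le> c k \<and> even (c k - d k) \<and> d k \<ge> 1" if "a \<le> k" "k < b" for k
  proof -
    have c1: "c k \<ge> 1" using A3 that unfolding c_def by (simp add: Suc_le_eq)
    have par: "odd (c k) \<longleftrightarrow> (i \<le> k \<and> k < j)"
      using A4[rule_format, of k] unfolding c_def s_def[symmetric] t_def[symmetric] i_def j_def by auto
    show ?thesis
    proof (cases "k < i")
      case True
      then have "d k = 2" "even (c k)" using dk[of k] that par ij by auto
      then show ?thesis using c1 by presburger
    next
      case False
      show ?thesis
      proof (cases "k < j")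
        case True
        then have "d k = 1" "odd (c k)" using dk[of k] that par ij False by auto
        then show ?thesis using c1 by presburger
      next
        case False2: False
        then have "d k = 2" "even (c k)" using dk[of k] that par ij False by auto
        then show ?thesis using c1 by presburger
      qed
    qed
  qed
  define h where "h k = (c k - d k) div 2" for k
  define X where "X = (\<Sum>k\<in>{a..<b}. replicate_mset (h k) (edg k))"
  have cX: "count X x = (if \<exists>k\<in>{a..<b}. x = edg k then h (THE k. x = edg k) else 0)" for x
  proof (cases "\<exists>k\<in>{a..<b}. x = edg k")
    case True
    then obtain k where k: "k \<in> {a..<b}" "x = edg k" by blast
    have "count X x = (\<Sum>k'\<in>{a..<b}. if k' = k then h k' else 0)"
      unfolding X_def count_sum k(2) by (intro sum.cong) auto
    also have "\<dots> = h k" using k(1) by simp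
    finally show ?thesis using True k by simp
  next
    case False
    then show ?thesis unfolding X_def count_sum by (auto intro!: sum.neutral)
  qed
  have Xsub: "set_mset X \<subseteq> set_mset (walk_edges S)"
  proof
    fix x assume "x \<in># X"
    then have "count X x > 0" by simp
    then obtain k where k: "k \<in> {a..<b}" "x = edg k" using cX[of x] by (auto split: if_splits)
    then have "d k \<ge> 1" using cd by auto
    then show "x \<in># walk_edges S" unfolding k(2) d_def by simp
  qed
  obtain cs where cs: "length cs = length S - 1" "walk_edges (expand S cs) = walk_edges S + X + X"
    using expand_we[OF Xsub] by blast
  define W' where "W' = expand S cs"
  have W'p: "successively path_adj W'" "set W' \<subseteq> set S" "W' \<noteq> []"
    using expand_props[OF Sp(1), of cs] Sp(2) unfolding W'_def by auto
  have eq: "walk_edges W' = walk_edges W"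
  proof (rule multiset_eqI)
    fix x
    show "count (walk_edges W') x = count (walk_edges W) x"
    proof (cases "\<exists>k\<in>{a..<b}. x = edg k")
      case True
      then obtain k where k: "k \<in> {a..<b}" "x = edg k" by blast
      have "count X x = h k" using cX[of x] True k by simp
      moreover have "d k \<le> c k \<and> even (c k - d k)" using cd k(1) by auto
      ultimately show ?thesis unfolding W'_def cs(2) k(2) using k
        by (simp add: c_def d_def h_def) presburger
    next
      case False
      have "count X x = 0" using cX False by simp
      moreover have "x \<notin># walk_edges W" using A2 False by (metis atLeastLessThan_iff)
      moreover have "x \<notin># walk_edges S" using False ij unfolding Swe by auto
      ultimately show ?thesis unfolding W'_def cs(2) by (simp add: not_in_iff)
    qed
  qed
  show ?thesis
  proof (intro exI conjI)
    show "is_walk_path n W'" unfolding walk_succ using W'p Sp(3) bn by auto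
    show "equivalent_walks W' W" unfolding equivalent_walks_def by (rule eq)
    show "is_walk_path n S" unfolding walk_succ using Sp bn by auto
    show "follows W' S" unfolding follows_def W'_def using cs(1) by blast
    show "S = zigzag i a b j" by (rule S_def)
  qed (use ij in auto)
qed

end
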